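(* $2^{\omega}\in I_0^{*}$; that is, $2^\omega$ is the union of countably many sets $A\subseteq 2^\omega$ each of which has the property that there is a nonempty perfect set $P\subseteq 2^\omega$ such that the sets $A\oplus x$, $x\in P$, are pairwise disjoint.
   Context: $2^\omega$ is the Cantor group with coordinatewise addition modulo 2, denoted $\oplus$; $A\oplus x=\{a\oplus x:a\in A\}$. $I_0^*$ is the $\sigma$-ideal on $2^\omega$ generated by all (not necessarily Borel) sets $A\subseteq 2^\omega$ for which there is a nonempty perfect $P\subseteq 2^\omega$ with $\{A\oplus x:x\in P\}$ pairwise disjoint. *)

theory Defs
  imports "HOL-Analysis.Analysis"
begin

text \<open>Cantor space 2^omega is the type nat \<Rightarrow> bool, carrying the product topology
  (from HOL-Analysis Function_Topology) of the discrete topology on bool.\<close>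

type_synonym cantor = "nat \<Rightarrow> bool"

definition cantor_add :: "cantor \<Rightarrow> cantor \<Rightarrow> cantor"  (infixl "\<oplus>\<^sub>c" 65) where
  "x \<oplus>\<^sub>c y = (\<lambda>n. x n \<noteq> y n)"

definition translate :: "cantor set \<Rightarrow> cantor \<Rightarrow> cantor set" where
  "translate A x = (\<lambda>a. a \<oplus>\<^sub>c x) ` A"

definition perfect_set :: "cantor set \<Rightarrow> bool" where
  "perfect_set P \<longleftrightarrow> closed P \<and> (\<forall>x\<in>P. x islimpt P)"

definition I0_gen :: "cantor set \<Rightarrow> bool" where
  "I0_gen A \<longleftrightarrow> (\<exists>P. P \<noteq> {} \<and> perfect_set P \<and>
      (\<forall>x\<in>P. \<forall>y\<in>P. x \<noteq> y \<longrightarrow> translate A x \<inter> translate A y = {}))"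

definition I0_star :: "cantor set set" where
  "I0_star = {B. \<exists>F. countable F \<and> (\<forall>A\<in>F. I0_gen A) \<and> B \<subseteq> \<Union>F}"

end

theory Submission
  imports Defs
begin

definition blk :: "nat \<Rightarrow> nat" where "blk n = fst (prod_decode n)"

definition Eq0 :: "cantor \<Rightarrow> cantor \<Rightarrow> bool" where
  "Eq0 y z \<longleftrightarrow> finite {k. \<exists>n. blk n = k \<and> y n \<noteq> z n}"

definition rep :: "cantor \<Rightarrow> cantor" where "rep y = (SOME w. Eq0 w y)"

definition Ablk :: "nat \<Rightarrow> cantor set" where
  "Ablk i = {y. \<forall>n. blk n = i \<longrightarrow> y n = rep y n}"

definition Pblk :: "nat \<Rightarrow> cantor set" where
  "Pblk i = {x. \<forall>n. blk n \<noteq> i \<longrightarrow> \<not> x n}"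

lemma Eq0_refl: "Eq0 y y" by (simp add: Eq0_def)

lemma Eq0_trans: assumes "Eq0 w a" "Eq0 a b" shows "Eq0 w b"
proof -
  have "{k. \<exists>n. blk n = k \<and> w n \<noteq> b n} \<subseteq>
        {k. \<exists>n. blk n = k \<and> w n \<noteq> a n} \<union> {k. \<exists>n. blk n = k \<and> a n \<noteq> b n}" by auto
  then show ?thesis using assms unfolding Eq0_def by (meson finite_Un finite_subset)
qed

lemma Eq0_sym: assumes "Eq0 a b" shows "Eq0 b a"
proof -
  have "{k. \<exists>n. blk n = k \<and> a n \<noteq> b n} = {k. \<exists>n. blk n = k \<and> b n \<noteq> a n}" by auto
  then show ?thesis using assms unfolding Eq0_def by simp
qed

lemma rep_eq: assumes "Eq0 a b" shows "rep a = rep b"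
proof -
  have "{w. Eq0 w a} = {w. Eq0 w b}"
    using assms Eq0_trans Eq0_sym by blast
  then have "(\<lambda>w. Eq0 w a) = (\<lambda>w. Eq0 w b)" by (metis Collect_inj)
  then show ?thesis unfolding rep_def by simp
qed

lemma rep_Eq0: "Eq0 (rep y) y"
  unfolding rep_def by (rule someI[of _ y]) (rule Eq0_refl)

lemma cover: "y \<in> (\<Union>i. Ablk i)"
proof -
  have fin: "finite {k. \<exists>n. blk n = k \<and> rep y n \<noteq> y n}"
    using rep_Eq0 unfolding Eq0_def .
  obtain i where i: "i \<notin> {k. \<exists>n. blk n = k \<and> rep y n \<noteq> y n}"
    using fin infinite_UNIV_nat by (meson ex_new_if_finite)
  then have "y \<in> Ablk i" unfolding Ablk_def by auto
  then show ?thesis by blast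
qed

lemma disj: assumes "x \<in> Pblk i" "x' \<in> Pblk i" "x \<noteq> x'"
  shows "translate (Ablk i) x \<inter> translate (Ablk i) x' = {}"
proof (rule ccontr)
  assume "translate (Ablk i) x \<inter> translate (Ablk i) x' \<noteq> {}"
  then obtain a b where a: "a \<in> Ablk i" and b: "b \<in> Ablk i" and e: "a \<oplus>\<^sub>c x = b \<oplus>\<^sub>c x'"
    unfolding translate_def by auto
  have e2: "(a n \<noteq> x n) = (b n \<noteq> x' n)" for n
  proof -
    have "(a \<oplus>\<^sub>c x) n = (b \<oplus>\<^sub>c x') n" using e by simp
    then show ?thesis unfolding cantor_add_def by simp
  qed
  have off: "blk n \<noteq> i \<Longrightarrow> a n = b n" for n
    using assms(1,2) e2[of n] unfolding Pblk_def by auto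
  have "{k. \<exists>n. blk n = k \<and> a n \<noteq> b n} \<subseteq> {i}" using off by auto
  then have "Eq0 a b" unfolding Eq0_def using finite_subset by blast
  then have r: "rep a = rep b" by (rule rep_eq)
  have "a n = b n" for n
  proof (cases "blk n = i")
    case True
    then show ?thesis using a b r unfolding Ablk_def by auto
  qed (rule off)
  then have "x n = x' n" for n using e2[of n] by auto
  then show False using assms(3) by auto
qed

lemma Pblk_closed: "closed (Pblk i)"
proof -
  have eq: "Pblk i = (\<Inter>n\<in>{n. blk n \<noteq> i}. {x::cantor. x n = False})"
    unfolding Pblk_def by (rule set_eqI) simp
  have "closed (\<Inter>n\<in>{n. blk n \<noteq> i}. {x::cantor. x n = False})"
  proof (rule closed_INT, rule ballI)
    fix n assume "n \<in> {n. blk n \<noteq> i}"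
    show "closed {x::cantor. x n = False}"
      by (rule closed_Collect_eq) (auto intro: continuous_on_const)
  qed
  then show ?thesis using eq by simp
qed

lemma Pblk_limpt: assumes "x \<in> Pblk i" shows "x islimpt Pblk i"
  unfolding islimpt_def
proof (intro allI impI)
  fix T :: "cantor set" assume xT: "x \<in> T" and oT: "open T"
  then obtain X where X: "x \<in> (\<Pi>\<^sub>E j\<in>UNIV. X j)" "finite {j. X j \<noteq> topspace (euclidean::bool topology)}"
     "(\<Pi>\<^sub>E j\<in>UNIV. X j) \<subseteq> T"
    using product_topology_open_contains_basis[of "\<lambda>_. euclidean" UNIV T x]
    unfolding open_fun_def by auto
  have "finite (snd ` prod_decode ` {j. X j \<noteq> UNIV})" using X(2) by auto
  then obtain m where m: "m \<notin> snd ` prod_decode ` {j. X j \<noteq> UNIV}"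
    using infinite_UNIV_nat by (meson ex_new_if_finite)
  define n where "n = prod_encode (i, m)"
  have bn: "blk n = i" unfolding n_def blk_def by simp
  have Xn: "X n = UNIV" using m unfolding n_def
    by (metis (mono_tags, lifting) image_eqI mem_Collect_eq prod_encode_inverse snd_conv)
  define y where "y = x(n := \<not> x n)"
  have "y j \<in> X j" for j
  proof (cases "j = n")
    case True then show ?thesis using Xn by simp
  next
    case False then show ?thesis using X(1) unfolding y_def by (simp add: PiE_iff)
  qed
  then have "y \<in> (\<Pi>\<^sub>E j\<in>UNIV. X j)" by (simp add: PiE_iff)
  then have "y \<in> T" using X(3) by blast
  moreover have "y \<in> Pblk i" using assms bn unfolding y_def Pblk_def by auto
  moreover have "y \<noteq> x" unfolding y_def by (metis fun_upd_same)
  ultimately show "\<exists>y\<in>Pblk i. y \<in> T \<and> y \<noteq> x" by blast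
qed

lemma gen: "I0_gen (Ablk i)"
  unfolding I0_gen_def
proof (intro exI conjI)
  show "Pblk i \<noteq> {}" unfolding Pblk_def by auto
  show "perfect_set (Pblk i)" unfolding perfect_set_def using Pblk_closed Pblk_limpt by blast
  show "\<forall>x\<in>Pblk i. \<forall>y\<in>Pblk i. x \<noteq> y \<longrightarrow> translate (Ablk i) x \<inter> translate (Ablk i) y = {}"
    using disj by blast
qed

theorem theorem3p1:
  shows "(UNIV :: cantor set) \<in> I0_star"
  unfolding I0_star_def
proof (intro CollectI exI conjI)
  show "countable (range Ablk)" by simp
  show "\<forall>A\<in>range Ablk. I0_gen A" using gen by blast
  show "(UNIV :: cantor set) \<subseteq> \<Union>(range Ablk)" using cover by blast
qed

end
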